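(* Let $-1\le a<1/4$ and $m\ge0$ an integer. For $\theta\in(2\pi/3,\pi)$ define \[ \zeta(\theta)=\frac{(2a-1)\cos\theta+\sqrt{(1-4a)\cos^2\theta+a}}{1-4a\cos^2\theta},\qquad g_m(\theta)=\frac{(\zeta(\theta)-\cos\theta)\sin((m+1)\theta)}{\sin\theta}-\cos((m+1)\theta)+\frac{1}{\zeta(\theta)^{m+1}}. \] Then the sign of $\lim_{\theta\to\pi^-}g_m(\theta)$ is $(-1)^m$. *)

theory Defs
  imports Complex_Main
begin

definition zeta :: "real \<Rightarrow> real \<Rightarrow> real" where
  "zeta a \<theta> = ((2*a - 1) * cos \<theta> + sqrt ((1 - 4*a) * (cos \<theta>)^2 + a)) / (1 - 4*a*(cos \<theta>)^2)"

definition g :: "real \<Rightarrow> nat \<Rightarrow> real \<Rightarrow> real" where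
  "g a m \<theta> = (zeta a \<theta> - cos \<theta>) * sin (real (m+1) * \<theta>) / sin \<theta>
              - cos (real (m+1) * \<theta>) + 1 / (zeta a \<theta>) ^ (m+1)"

end

theory Submission
  imports Defs
begin

lemma quot_lim:
  assumes "(f has_real_derivative f') (at c)" "(h has_real_derivative h') (at c)"
    "f c = 0" "h c = 0" "h' \<noteq> 0"
  shows "((\<lambda>x. f x / h x) \<longlongrightarrow> f'/h') (at c)"
proof -
  have 1: "((\<lambda>y. (f y - f c)/(y - c)) \<longlongrightarrow> f') (at c)"
    using assms(1) by (simp add: has_field_derivative_iff)
  have 2: "((\<lambda>y. (h y - h c)/(y - c)) \<longlongrightarrow> h') (at c)"
    using assms(2) by (simp add: has_field_derivative_iff)
  have 3: "((\<lambda>y. ((f y - f c)/(y - c)) / ((h y - h c)/(y - c))) \<longlongrightarrow> f'/h') (at c)"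
    using tendsto_divide[OF 1 2 assms(5)] .
  have ev: "\<forall>\<^sub>F y in at c. ((f y - f c)/(y - c)) / ((h y - h c)/(y - c)) = f y / h y"
    using eventually_at_filter[of "\<lambda>_. True"] 
    by (auto simp: eventually_at_filter assms(3,4))
  show ?thesis using tendsto_cong[OF ev] 3 by simp
qed

lemma zc: "isCont (zeta a) pi" if "a < 1/4"
  unfolding zeta_def using that by (intro continuous_intros) auto

lemma ratio: "((\<lambda>t. sin (real (m+1) * t) / sin t) \<longlongrightarrow> real (m+1) * (-1)^m) (at_left pi)"
proof -
  have "((\<lambda>t. sin (real (m+1) * t) / sin t) \<longlongrightarrow> (real (m+1) * cos (real (m+1) * pi)) / cos pi) (at pi)"
    apply (rule quot_lim)
    apply (auto intro!: derivative_eq_intros)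
    by (metis sin_npi of_nat_Suc add.commute)
  moreover have "(real (m+1) * cos (real (m+1) * pi)) / cos pi = real (m+1) * (-1)^m"
    using cos_npi[of "m+1"] by simp
  ultimately show ?thesis by (simp add: filterlim_at_split)
qed
lemma zeta_ge1:
  assumes "-1 \<le> a" "a < 1/4" shows "zeta a pi \<ge> 1"
proof -
  have d: "1 - 4*a > 0" using assms by simp
  have s: "sqrt (1 - 3*a) \<ge> -2*a"
  proof (cases "a \<ge> 0")
    case True then show ?thesis using real_sqrt_ge_zero[of "1-3*a"] assms by linarith
  next
    case False
    have "(4*a-1)*(a+1) \<le> 0" using assms by (intro mult_nonpos_nonneg) auto
    then have "(-2*a)^2 \<le> 1 - 3*a" by (simp add: power2_eq_square algebra_simps)
    then have "sqrt ((-2*a)^2) \<le> sqrt (1 - 3*a)" by (rule real_sqrt_le_mono)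
    moreover have "sqrt ((-2*a)^2) = -2*a" using False by (simp only: real_sqrt_abs)
    ultimately show ?thesis by linarith
  qed
  have "zeta a pi = (1 - 2*a + sqrt (1 - 3*a)) / (1 - 4*a)"
    unfolding zeta_def by (simp add: algebra_simps)
  also have "\<dots> \<ge> 1"
  proof -
    have "1 - 4*a \<le> 1 - 2*a + sqrt (1 - 3*a)" using s assms by linarith
    then show ?thesis using d by (simp add: le_divide_eq)
  qed
  finally show ?thesis .
qed

theorem lemma2p10:
  fixes a :: real and m :: nat
  assumes "-1 \<le> a" and "a < 1/4"
  shows "\<exists>L. (g a m \<longlongrightarrow> L) (at_left pi) \<and> sgn L = (-1) ^ m"
proof -
  define z where "z = zeta a pi"
  have z1: "z \<ge> 1" using zeta_ge1[OF assms] z_def by simp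
  have zt: "(zeta a \<longlongrightarrow> z) (at_left pi)"
    using zc[OF assms(2)] unfolding z_def isCont_def by (simp add: filterlim_at_split)
  have ct: "(cos \<longlongrightarrow> cos pi) (at_left pi)"
    by (intro tendsto_intros)
  have ct2: "((\<lambda>t. cos (real (m+1) * t)) \<longlongrightarrow> cos (real (m+1) * pi)) (at_left pi)"
    by (intro tendsto_intros)
  define L where "L = (z - cos pi) * (real (m+1) * (-1)^m) - cos (real (m+1) * pi) + 1 / z^(m+1)"
  have pr: "((\<lambda>x. (zeta a x - cos x) * (sin (real (m+1) * x) / sin x)) \<longlongrightarrow> (z - cos pi) * (real (m+1) * (-1)^m)) (at_left pi)"
    by (intro tendsto_mult tendsto_diff zt ct ratio)
  have "(g a m \<longlongrightarrow> L) (at_left pi)"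
    unfolding g_def[abs_def] L_def times_divide_eq_right[symmetric]
    using z1 by (intro tendsto_intros pr ct2 zt) auto
  moreover have "sgn L = (-1)^m"
  proof -
    have L: "L = (-1)^m * ((z+1) * real (m+1) + 1) + 1 / z^(m+1)"
      unfolding L_def using cos_npi[of "m+1"] by (simp add: algebra_simps)
    have p: "1 \<le> z^(m+1)" by (rule one_le_power[OF z1])
    have b1: "0 < 1 / z^(m+1)" "1 / z^(m+1) \<le> 1" using p by auto
    have A: "(z+1) * real (m+1) + 1 \<ge> 3" 
    proof -
      have "(z+1) * real (m+1) \<ge> 2 * 1" using z1 by (intro mult_mono) auto
      then show ?thesis by simp
    qed
    show ?thesis
    proof (cases "even m")
      case True
      then have "L = ((z+1) * real (m+1) + 1) + 1 / z^(m+1)" using L by simp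
      then have "L > 0" using b1 A by linarith
      then show ?thesis using True by simp
    next
      case False
      then have "L = -((z+1) * real (m+1) + 1) + 1 / z^(m+1)" using L by simp
      then have "L < 0" using b1 A by linarith
      then show ?thesis using False by simp
    qed
  qed
  ultimately show ?thesis by blast
qed
end
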